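(* Let $\mathcal{Y}$, $\mathcal{O}$ be finite sets, $\varphi\colon\mathcal{Y}\to\mathbb{R}^p$, $\psi\colon\mathcal{O}\to\mathbb{R}^p$, and $L(\hat y,y)=\langle\psi(\hat y),V\varphi(y)+b\rangle+c(y)$ with $V\in\mathbb{R}^{p\times p}$, $b\in\mathbb{R}^p$, $c\colon\mathcal{Y}\to\mathbb{R}$. Let $\Psi\colon\mathbb{R}^p\to\mathbb{R}\cup\{\infty\}$ be of Legendre type and $\frac1\beta$-strongly convex over $\mathcal{C}$ w.r.t. a norm $\|\cdot\|$ ($\beta>0$), where $\mathcal{C}$ is a closed convex set with $\varphi(\mathcal{Y})\subseteq\mathcal{C}\subseteq\operatorname{dom}(\Psi)$. Let $\sigma:=\max_{\hat y\in\mathcal{O}}\|V^\top\psi(\hat y)\|_*>0$. Take the surrogate $S(\theta,y)=S^\Psi_{\mathcal{C}}(\theta,y)$ and the decoder $d=\hat y_L\circ P^\Psi_{\mathcal{C}}$. Then the calibration function satisfies $$\zeta(\epsilon)\ge\frac{\epsilon^2}{8\beta\sigma^2}\qquad\text{for all }\epsilon\ge0.$$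
   Context: $\Omega=\Psi+I_{\mathcal{C}}$ with $I_{\mathcal{C}}$ the indicator of $\mathcal{C}$; $S^\Psi_{\mathcal{C}}(\theta,y)=\Omega^*(\theta)+\Omega(\varphi(y))-\langle\theta,\varphi(y)\rangle$ with $\Omega^*$ the Fenchel conjugate. $P^\Psi_{\mathcal{C}}(\theta)=\operatorname{argmin}_{u\in\mathcal{C}}D_\Psi(u,\nabla\Psi^*(\theta))$, $D_\Psi(u,v)=\Psi(u)-\Psi(v)-\langle\nabla\Psi(v),u-v\rangle$; under the hypotheses $P^\Psi_{\mathcal{C}}=\nabla\Omega^*$. Strong convexity over $\mathcal{C}$: $\Psi(tu+(1-t)v)\le t\Psi(u)+(1-t)\Psi(v)-\frac{t(1-t)}{2\beta}\|u-v\|^2$ for $u,v\in\mathcal{C}$, $t\in[0,1]$. $\|\cdot\|_*$ is the dual norm. $\hat y_L(u)\in\operatorname{argmin}_{y'\in\mathcal{O}}\langle\psi(y'),Vu+b\rangle$ (fixed tie-breaking). Pointwise risks for $q\in\triangle^{|\mathcal{Y}|}$: $\ell(\hat y,q)=\mathbb{E}_{Y\sim q}L(\hat y,Y)$, $s(\theta,q)=\mathbb{E}_{Y\sim q}S(\theta,Y)$, excesses $\delta\ell(\hat y,q)=\ell(\hat y,q)-\min_{y'\in\mathcal{O}}\ell(y',q)$, $\delta s(\theta,q)=s(\theta,q)-\inf_{\theta'}s(\theta',q)$. Calibration function: $\zeta(\epsilon)=\inf_{\theta\in\mathbb{R}^p,q\in\triangle^{|\mathcal{Y}|}}\delta s(\theta,q)$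 subject to $\delta\ell(d(\theta),q)\ge\epsilon$. *)

theory Defs
  imports "HOL-Analysis.Analysis"
begin

text \<open>Extended-real valued functions on R^p are modelled as \<open>real^'p \<Rightarrow> ereal\<close>
  (values in R \<union> {\<infinity>}).\<close>

definition edom :: "('a \<Rightarrow> ereal) \<Rightarrow> 'a set" where
  "edom f = {x. f x < \<infinity>}"

definition proper_fun :: "('a \<Rightarrow> ereal) \<Rightarrow> bool" where
  "proper_fun f \<longleftrightarrow> (\<forall>x. f x \<noteq> -\<infinity>) \<and> edom f \<noteq> {}"

definition convex_efun :: "('a::real_vector \<Rightarrow> ereal) \<Rightarrow> bool" where
  "convex_efun f \<longleftrightarrow> (\<forall>x y t. 0 \<le> t \<and> t \<le> 1 \<longrightarrow>
      f (t *\<^sub>R x + (1 - t) *\<^sub>R y) \<le> ereal t * f x + ereal (1 - t) * f y)"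

definition closed_efun :: "('a::topological_space \<Rightarrow> ereal) \<Rightarrow> bool" where
  "closed_efun f \<longleftrightarrow> closed {(x, t::real). f x \<le> ereal t}"

text \<open>Gradient of an (extended) real function at a point (meaningful where it is
  finite and differentiable).\<close>
definition egrad :: "(real^'p \<Rightarrow> ereal) \<Rightarrow> real^'p \<Rightarrow> real^'p" where
  "egrad f x = (SOME g. ((\<lambda>z. real_of_ereal (f z)) has_derivative (\<lambda>h. g \<bullet> h)) (at x))"

definition differentiable_efun_at :: "(real^'p \<Rightarrow> ereal) \<Rightarrow> real^'p \<Rightarrow> bool" where
  "differentiable_efun_at f x \<longleftrightarrow> f x \<noteq> \<infinity> \<and> f x \<noteq> -\<infinity> \<and>
     (\<exists>g. ((\<lambda>z. real_of_ereal (f z)) has_derivative (\<lambda>h. g \<bullet> h)) (at x))"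

definition essentially_smooth :: "(real^'p \<Rightarrow> ereal) \<Rightarrow> bool" where
  "essentially_smooth f \<longleftrightarrow>
     interior (edom f) \<noteq> {} \<and>
     (\<forall>x \<in> interior (edom f). differentiable_efun_at f x) \<and>
     (\<forall>X x. (\<forall>k. X k \<in> interior (edom f)) \<longrightarrow> X \<longlonglongrightarrow> x \<longrightarrow>
         x \<in> frontier (interior (edom f)) \<longrightarrow>
         filterlim (\<lambda>k. norm (egrad f (X k))) at_top sequentially)"

text \<open>Essentially strictly convex; for an essentially smooth convex function this is
  strict convexity on the interior of its domain (= dom of the subdifferential).\<close>
definition strictly_convex_on_int_dom :: "(real^'p \<Rightarrow> ereal) \<Rightarrow> bool" where
  "strictly_convex_on_int_dom f \<longleftrightarrow>
     (\<forall>x \<in> interior (edom f). \<forall>y \<in> interior (edom f). \<forall>t. x \<noteq> y \<and> 0 < t \<and> t < 1 \<longrightarrow>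
        f (t *\<^sub>R x + (1 - t) *\<^sub>R y) < ereal t * f x + ereal (1 - t) * f y)"

definition legendre_type :: "(real^'p \<Rightarrow> ereal) \<Rightarrow> bool" where
  "legendre_type f \<longleftrightarrow> proper_fun f \<and> convex_efun f \<and> closed_efun f \<and>
     essentially_smooth f \<and> strictly_convex_on_int_dom f"

definition is_norm :: "(real^'p \<Rightarrow> real) \<Rightarrow> bool" where
  "is_norm N \<longleftrightarrow> (\<forall>x. N x = 0 \<longleftrightarrow> x = 0) \<and> (\<forall>x y. N (x + y) \<le> N x + N y) \<and>
     (\<forall>c x. N (c *\<^sub>R x) = \<bar>c\<bar> * N x)"

definition dual_norm :: "(real^'p \<Rightarrow> real) \<Rightarrow> real^'p \<Rightarrow> real" where
  "dual_norm N v = Sup {v \<bullet> u | u. N u \<le> 1}"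

definition strongly_convex_over :: "(real^'p \<Rightarrow> ereal) \<Rightarrow> (real^'p) set \<Rightarrow> (real^'p \<Rightarrow> real) \<Rightarrow> real \<Rightarrow> bool" where
  "strongly_convex_over f C N \<beta> \<longleftrightarrow> (\<forall>u\<in>C. \<forall>v\<in>C. \<forall>t. 0 \<le> t \<and> t \<le> 1 \<longrightarrow>
     f (t *\<^sub>R u + (1 - t) *\<^sub>R v) \<le> ereal t * f u + ereal (1 - t) * f v
        - ereal (t * (1 - t) / (2 * \<beta>) * (N (u - v))\<^sup>2))"

definition fenchel_conj :: "(real^'p \<Rightarrow> ereal) \<Rightarrow> real^'p \<Rightarrow> ereal" where
  "fenchel_conj f \<theta> = (SUP u. ereal (\<theta> \<bullet> u) - f u)"

definition Omega :: "(real^'p \<Rightarrow> ereal) \<Rightarrow> (real^'p) set \<Rightarrow> real^'p \<Rightarrow> ereal" where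
  "Omega \<Psi> C u = (if u \<in> C then \<Psi> u else \<infinity>)"

definition surrogate :: "(real^'p \<Rightarrow> ereal) \<Rightarrow> (real^'p) set \<Rightarrow> ('y \<Rightarrow> real^'p) \<Rightarrow> real^'p \<Rightarrow> 'y \<Rightarrow> ereal" where
  "surrogate \<Psi> C \<phi> \<theta> y = fenchel_conj (Omega \<Psi> C) \<theta> + Omega \<Psi> C (\<phi> y) - ereal (\<theta> \<bullet> \<phi> y)"

text \<open>Projection P^Psi_C, taken as grad Omega* (equal to the Bregman projection under
  the hypotheses, as stated in the context).\<close>
definition proj_PsiC :: "(real^'p \<Rightarrow> ereal) \<Rightarrow> (real^'p) set \<Rightarrow> real^'p \<Rightarrow> real^'p" where
  "proj_PsiC \<Psi> C \<theta> = egrad (fenchel_conj (Omega \<Psi> C)) \<theta>"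

definition prob_simplex :: "('y::finite \<Rightarrow> real) set" where
  "prob_simplex = {q. (\<forall>y. 0 \<le> q y) \<and> sum q UNIV = 1}"

definition ptw_loss :: "('o \<Rightarrow> 'y::finite \<Rightarrow> real) \<Rightarrow> 'o \<Rightarrow> ('y \<Rightarrow> real) \<Rightarrow> real" where
  "ptw_loss L yh q = (\<Sum>y\<in>UNIV. q y * L yh y)"

definition excess_loss :: "('o::finite \<Rightarrow> 'y::finite \<Rightarrow> real) \<Rightarrow> 'o \<Rightarrow> ('y \<Rightarrow> real) \<Rightarrow> real" where
  "excess_loss L yh q = ptw_loss L yh q - Min (range (\<lambda>y'. ptw_loss L y' q))"

definition ptw_surr :: "('t \<Rightarrow> 'y::finite \<Rightarrow> ereal) \<Rightarrow> 't \<Rightarrow> ('y \<Rightarrow> real) \<Rightarrow> ereal" where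
  "ptw_surr S \<theta> q = (\<Sum>y\<in>UNIV. ereal (q y) * S \<theta> y)"

definition excess_surr :: "('t \<Rightarrow> 'y::finite \<Rightarrow> ereal) \<Rightarrow> 't \<Rightarrow> ('y \<Rightarrow> real) \<Rightarrow> ereal" where
  "excess_surr S \<theta> q = ptw_surr S \<theta> q - (INF \<theta>'. ptw_surr S \<theta>' q)"

definition calibration_fun :: "('o::finite \<Rightarrow> 'y::finite \<Rightarrow> real) \<Rightarrow> ('t \<Rightarrow> 'y \<Rightarrow> ereal)
    \<Rightarrow> ('t \<Rightarrow> 'o) \<Rightarrow> real \<Rightarrow> ereal" where
  "calibration_fun L S d \<epsilon> =
     (INF (\<theta>, q) \<in> {(\<theta>, q). q \<in> prob_simplex \<and> excess_loss L (d \<theta>) q \<ge> \<epsilon>}. excess_surr S \<theta> q)"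

end

theory Submission
  imports Defs
begin

lemma nN:
  assumes "is_norm N"
  shows nN_0: "N 0 = 0" and nN_neg: "N (-x) = N x" and nN_nonneg: "N x \<ge> 0"
    and nN_scale: "N (c *\<^sub>R x) = \<bar>c\<bar> * N x" and nN_add: "N (x + y) \<le> N x + N y"
    and nN_sym: "N (x - y) = N (y - x)" and nN_eq0: "N x = 0 \<longleftrightarrow> x = 0"
proof -
  show s: "N (c *\<^sub>R x) = \<bar>c\<bar> * N x" for c x using assms unfolding is_norm_def by blast
  show a: "N (x + y) \<le> N x + N y" for x y using assms unfolding is_norm_def by blast
  show "N x = 0 \<longleftrightarrow> x = 0" using assms unfolding is_norm_def by blast
  show z: "N 0 = 0" using s[of 0 0] by simp
  show ng: "N (-x) = N x" for x using s[of "-1" x] by simp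
  show "N x \<ge> 0" using a[of x "-x"] z ng[of x] by simp
  show "N (x - y) = N (y - x)" using ng[of "x - y"] by simp
qed

lemma nN_sum:
  assumes "is_norm N" "finite A"
  shows "N (sum f A) \<le> (\<Sum>i\<in>A. N (f i))"
  using assms(2)
proof (induction A rule: finite_induct)
  case empty then show ?case using nN_0[OF assms(1)] by simp
next
  case (insert a A)
  then show ?case using nN_add[OF assms(1), of "f a" "sum f A"] by simp
qed

lemma nN_upper:
  fixes N :: "real^'p \<Rightarrow> real"
  assumes "is_norm N"
  obtains c1 where "c1 \<ge> 0" "\<And>x. N x \<le> c1 * norm x"
proof -
  let ?c = "\<Sum>b\<in>(Basis::(real^'p) set). N b"
  have "N x \<le> ?c * norm x" for x
  proof -
    have "N x = N (\<Sum>b\<in>Basis. (x \<bullet> b) *\<^sub>R b)" by (simp add: euclidean_representation)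
    also have "\<dots> \<le> (\<Sum>b\<in>Basis. N ((x \<bullet> b) *\<^sub>R b))" by (rule nN_sum[OF assms]) simp
    also have "\<dots> = (\<Sum>b\<in>Basis. \<bar>x \<bullet> b\<bar> * N b)" by (simp add: nN_scale[OF assms])
    also have "\<dots> \<le> (\<Sum>b\<in>Basis. norm x * N b)"
      by (rule sum_mono, rule mult_right_mono, simp add: Basis_le_norm, simp add: nN_nonneg[OF assms])
    also have "\<dots> = ?c * norm x" by (simp add: sum_distrib_left mult.commute)
    finally show ?thesis .
  qed
  moreover have "?c \<ge> 0" by (simp add: sum_nonneg nN_nonneg[OF assms])
  ultimately show ?thesis using that by blast
qed

lemma nN_cont:
  fixes N :: "real^'p \<Rightarrow> real"
  assumes "is_norm N"
  shows "continuous_on S N"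
proof -
  obtain c1 where c1: "c1 \<ge> 0" "\<And>x. N x \<le> c1 * norm x" using nN_upper[OF assms] by blast
  have L: "\<bar>N x - N y\<bar> \<le> c1 * norm (x - y)" for x y
  proof -
    have "N x \<le> N y + N (x - y)" using nN_add[OF assms, of y "x - y"] by simp
    moreover have "N y \<le> N x + N (y - x)" using nN_add[OF assms, of x "y - x"] by simp
    moreover have "N (y - x) = N (x - y)" by (rule nN_sym[OF assms])
    ultimately show ?thesis using c1(2)[of "x - y"] by linarith
  qed
  show ?thesis unfolding continuous_on_iff
  proof (intro ballI allI impI)
    fix x e assume "x \<in> S" "(0::real) < e"
    show "\<exists>d>0. \<forall>x'\<in>S. dist x' x < d \<longrightarrow> dist (N x') (N x) < e"
    proof (intro exI[of _ "e / (c1 + 1)"] conjI ballI impI)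
      show "e / (c1 + 1) > 0" using \<open>0 < e\<close> c1 by simp
      fix x' assume "dist x' x < e / (c1 + 1)"
      then have "(c1 + 1) * norm (x' - x) < e" using c1 by (simp add: dist_norm field_simps)
      moreover have "c1 * norm (x' - x) \<le> (c1 + 1) * norm (x' - x)" by (simp add: algebra_simps)
      ultimately show "dist (N x') (N x) < e" using L[of x' x] by (simp add: dist_real_def)
    qed
  qed
qed

lemma nN_lower:
  fixes N :: "real^'p \<Rightarrow> real"
  assumes "is_norm N"
  obtains c0 where "c0 > 0" "\<And>x. c0 * norm x \<le> N x"
proof -
  have "compact (sphere (0::real^'p) 1)" by simp
  moreover have "sphere (0::real^'p) 1 \<noteq> {}"
    using vector_choose_size[of 1] by (auto simp: sphere_def)
  ultimately obtain x0 where x0: "x0 \<in> sphere 0 1" "\<And>y. y \<in> sphere 0 1 \<Longrightarrow> N x0 \<le> N y"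
    using continuous_attains_inf[OF _ _ nN_cont[OF assms]] by metis
  have "x0 \<noteq> 0" using x0(1) by auto
  then have pos: "N x0 > 0" using nN_eq0[OF assms, of x0] nN_nonneg[OF assms, of x0] by linarith
  have "N x0 * norm x \<le> N x" for x
  proof (cases "x = 0")
    case True then show ?thesis by (simp add: nN_0[OF assms])
  next
    case False
    have "(1 / norm x) *\<^sub>R x \<in> sphere 0 1" using False by (simp add: sphere_def)
    then have "N x0 \<le> N ((1 / norm x) *\<^sub>R x)" by (rule x0(2))
    also have "\<dots> = N x / norm x" by (simp add: nN_scale[OF assms])
    finally show ?thesis using False by (simp add: field_simps)
  qed
  then show ?thesis using that pos by blast
qed

lemma usc_max:
  fixes f :: "'a::topological_space \<Rightarrow> real"
  assumes K: "compact K" "K \<noteq> {}" and cl: "\<And>s. closed {v\<in>K. s \<le> f v}"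
  shows "\<exists>x\<in>K. \<forall>y\<in>K. f y \<le> f x"
proof (rule ccontr)
  assume "\<not> ?thesis"
  then have H: "\<forall>x\<in>K. \<exists>y\<in>K. f x < f y" by (meson not_le)
  have cov: "K \<subseteq> (\<Union>y\<in>K. - {v\<in>K. f y \<le> f v})" 
  proof
    fix x assume "x \<in> K"
    then obtain y where "y \<in> K" "f x < f y" using H by blast
    show "x \<in> (\<Union>y\<in>K. - {v\<in>K. f y \<le> f v})"
    proof (rule UN_I[of y])
      show "y \<in> K" by fact
      show "x \<in> - {v\<in>K. f y \<le> f v}" using \<open>f x < f y\<close> by simp
    qed
  qed
  have opn: "\<And>y. y \<in> K \<Longrightarrow> open (- {v\<in>K. f y \<le> f v})" using cl by (simp add: open_Compl)
  obtain D where D: "D \<subseteq> K" "finite D" "K \<subseteq> (\<Union>y\<in>D. - {v\<in>K. f y \<le> f v})"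
    by (rule compactE_image[OF K(1) opn cov])
  have "D \<noteq> {}" using D(3) K(2) by auto
  then have "Max (f ` D) \<in> f ` D" using D(2) by simp
  then obtain y0 where y0: "y0 \<in> D" "f y0 = Max (f ` D)" by auto
  then have "y0 \<in> K" using D(1) by auto
  then obtain y where "y \<in> D" "y0 \<in> - {v\<in>K. f y \<le> f v}" using D(3) by blast
  then have "f y0 < f y" using \<open>y0 \<in> K\<close> by simp
  moreover have "f y \<le> Max (f ` D)" using \<open>y \<in> D\<close> D(2) by simp
  ultimately show False using y0(2) by simp
qed

locale cset =
  fixes \<Psi> :: "real^'p \<Rightarrow> ereal" and C :: "(real^'p) set" and N :: "real^'p \<Rightarrow> real" and \<beta> :: real
  assumes closedE: "closed_efun \<Psi>" and notminf: "\<And>x. \<Psi> x \<noteq> -\<infinity>" and nrm: "is_norm N"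
    and bpos: "\<beta> > 0" and strong: "strongly_convex_over \<Psi> C N \<beta>" and Ccl: "closed C"
    and Ccv: "convex C" and Cne: "C \<noteq> {}" and Cdom: "C \<subseteq> edom \<Psi>"
begin

definition pr where "pr u = real_of_ereal (\<Psi> u)"
definition g where "g \<theta> v = \<theta> \<bullet> v - pr v"

lemma Psi_fin: "u \<in> C \<Longrightarrow> \<Psi> u = ereal (pr u)"
  using Cdom notminf[of u] unfolding pr_def edom_def by (cases "\<Psi> u") auto

lemma cmb: "u \<in> C \<Longrightarrow> v \<in> C \<Longrightarrow> 0 \<le> t \<Longrightarrow> t \<le> 1 \<Longrightarrow> t *\<^sub>R u + (1 - t) *\<^sub>R v \<in> C"
  by (rule convexD[OF Ccv]) auto

lemma sc_real:
  assumes "u \<in> C" "v \<in> C" "0 \<le> t" "t \<le> 1"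
  shows "pr (t *\<^sub>R u + (1 - t) *\<^sub>R v) \<le> t * pr u + (1 - t) * pr v - t * (1 - t) / (2 * \<beta>) * (N (u - v))\<^sup>2"
proof -
  have "\<Psi> (t *\<^sub>R u + (1 - t) *\<^sub>R v) \<le> ereal t * \<Psi> u + ereal (1 - t) * \<Psi> v
        - ereal (t * (1 - t) / (2 * \<beta>) * (N (u - v))\<^sup>2)"
    using strong assms unfolding strongly_convex_over_def by blast
  then show ?thesis using Psi_fin[OF assms(1)] Psi_fin[OF assms(2)] Psi_fin[OF cmb[OF assms]]
    by simp
qed

lemma g_conc:
  assumes "u \<in> C" "v \<in> C" "0 \<le> t" "t \<le> 1"
  shows "t * g \<theta> u + (1 - t) * g \<theta> v + t * (1 - t) / (2 * \<beta>) * (N (u - v))\<^sup>2 \<le> g \<theta> (t *\<^sub>R u + (1 - t) *\<^sub>R v)"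
  using sc_real[OF assms] unfolding g_def by (simp add: inner_add_right algebra_simps)

lemma closed_super: "closed {v\<in>C. s \<le> g \<theta> v}"
proof -
  have E: "closed {(x, t::real). \<Psi> x \<le> ereal t}" using closedE unfolding closed_efun_def .
  have "closed ((\<lambda>v. (v, \<theta> \<bullet> v - s)) -` {(x, t::real). \<Psi> x \<le> ereal t})"
    by (rule continuous_closed_vimage[OF E]) (intro continuous_intros)
  then have "closed (C \<inter> (\<lambda>v. (v, \<theta> \<bullet> v - s)) -` {(x, t::real). \<Psi> x \<le> ereal t})"
    using Ccl by blast
  moreover have "C \<inter> (\<lambda>v. (v, \<theta> \<bullet> v - s)) -` {(x, t::real). \<Psi> x \<le> ereal t} = {v\<in>C. s \<le> g \<theta> v}"
    using Psi_fin unfolding g_def by auto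
  ultimately show ?thesis by simp
qed

lemma max_on_compact:
  assumes "compact K" "K \<subseteq> C" "K \<noteq> {}"
  shows "\<exists>x\<in>K. \<forall>y\<in>K. g \<theta> y \<le> g \<theta> x"
proof (rule usc_max[OF assms(1,3)])
  fix s
  have "{v\<in>K. s \<le> g \<theta> v} = K \<inter> {v\<in>C. s \<le> g \<theta> v}" using assms(2) by auto
  then show "closed {v\<in>K. s \<le> g \<theta> v}"
    using closed_super compact_imp_closed[OF assms(1)] by auto
qed

lemma max_exists: "\<exists>u\<in>C. \<forall>v\<in>C. g \<theta> v \<le> g \<theta> u"
proof -
  obtain c0 where c0: "c0 > 0" "\<And>x. c0 * norm x \<le> N x" using nN_lower[OF nrm] by blast
  obtain u0 where u0: "u0 \<in> C" using Cne by blast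
  define K1 where "K1 = C \<inter> cball u0 1"
  have "compact K1" unfolding K1_def using Ccl by (simp add: closed_Int_compact)
  moreover have "u0 \<in> K1" using u0 by (simp add: K1_def)
  ultimately obtain x1 where x1: "x1 \<in> K1" "\<And>y. y \<in> K1 \<Longrightarrow> g \<theta> y \<le> g \<theta> x1"
    using max_on_compact[of K1] unfolding K1_def by blast
  define B where "B = g \<theta> x1"
  define R where "R = max 1 (1 + 2 * \<beta> * (B - g \<theta> u0) / c0\<^sup>2)"
  have bound: "dist u0 v \<le> R" if v: "v \<in> C" "g \<theta> u0 \<le> g \<theta> v" for v
  proof (rule ccontr)
    assume "\<not> dist u0 v \<le> R"
    then have rR: "norm (v - u0) > R" by (simp add: dist_norm norm_minus_commute)
    define r where "r = norm (v - u0)"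
    have r1: "r > 1" using rR unfolding R_def r_def by linarith
    define w where "w = (1 / r) *\<^sub>R v + (1 - 1 / r) *\<^sub>R u0"
    have t01: "0 \<le> 1 / r" "1 / r \<le> 1" using r1 by auto
    have wC: "w \<in> C" unfolding w_def by (rule cmb[OF v(1) u0 t01])
    have "w - u0 = (1 / r) *\<^sub>R (v - u0)" unfolding w_def by (simp add: algebra_simps)
    then have "norm (w - u0) = \<bar>1 / r\<bar> * r" unfolding r_def by (metis norm_scaleR)
    then have "norm (w - u0) = 1" using r1 by simp
    then have "w \<in> K1" using wC by (simp add: K1_def dist_norm norm_minus_commute)
    then have gw: "g \<theta> w \<le> B" using x1(2) B_def by blast
    have conc: "1 / r * g \<theta> v + (1 - 1 / r) * g \<theta> u0 + 1 / r * (1 - 1 / r) / (2 * \<beta>) * (N (v - u0))\<^sup>2 \<le> g \<theta> w"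
      unfolding w_def by (rule g_conc[OF v(1) u0 t01])
    have "c0 * r \<le> N (v - u0)" using c0(2) r_def by simp
    then have "(c0 * r)\<^sup>2 \<le> (N (v - u0))\<^sup>2" using c0(1) r1 by (intro power_mono) auto
    then have q: "1 / r * (1 - 1 / r) / (2 * \<beta>) * (c0 * r)\<^sup>2 \<le> 1 / r * (1 - 1 / r) / (2 * \<beta>) * (N (v - u0))\<^sup>2"
    proof (rule mult_left_mono)
      show "0 \<le> 1 / r * (1 - 1 / r) / (2 * \<beta>)" using t01 bpos by simp
    qed
    have e1: "1 / r * (1 - 1 / r) / (2 * \<beta>) * (c0 * r)\<^sup>2 = (r - 1) * c0\<^sup>2 / (2 * \<beta>)"
      using r1 bpos by (simp add: field_simps power2_eq_square)
    have "1 / r * g \<theta> v + (1 - 1 / r) * g \<theta> u0 \<ge> g \<theta> u0"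
      proof -
      have "(1 - 1 / r) * g \<theta> u0 + 1 / r * g \<theta> u0 = g \<theta> u0" by (simp add: algebra_simps)
      moreover have "1 / r * g \<theta> u0 \<le> 1 / r * g \<theta> v" using v(2) t01(1) by (rule mult_left_mono)
      ultimately show ?thesis by linarith
    qed
    then have "g \<theta> u0 + (r - 1) * c0\<^sup>2 / (2 * \<beta>) \<le> B" using conc q e1 gw by linarith
    then have "(r - 1) * c0\<^sup>2 / (2 * \<beta>) \<le> B - g \<theta> u0" by linarith
    then have "(r - 1) * c0\<^sup>2 \<le> (B - g \<theta> u0) * (2 * \<beta>)" using bpos by (simp add: pos_divide_le_eq)
    then have "r - 1 \<le> (B - g \<theta> u0) * (2 * \<beta>) / c0\<^sup>2" using c0(1) by (simp add: pos_le_divide_eq)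
    then have "r - 1 \<le> 2 * \<beta> * (B - g \<theta> u0) / c0\<^sup>2" by (simp add: mult.commute)
    then show False using rR r_def R_def by linarith
  qed
  define K2 where "K2 = C \<inter> cball u0 R"
  have "compact K2" unfolding K2_def using Ccl by (simp add: closed_Int_compact)
  moreover have "u0 \<in> K2" using u0 by (simp add: K2_def R_def)
  ultimately obtain x2 where x2: "x2 \<in> K2" "\<And>y. y \<in> K2 \<Longrightarrow> g \<theta> y \<le> g \<theta> x2"
    using max_on_compact[of K2] unfolding K2_def by blast
  have "g \<theta> v \<le> g \<theta> x2" if "v \<in> C" for v
  proof (cases "g \<theta> u0 \<le> g \<theta> v")
    case True
    then have "v \<in> K2" using bound[OF that] that by (simp add: K2_def)
    then show ?thesis by (rule x2(2))
  next
    case False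
    then show ?thesis using x2(2)[OF \<open>u0 \<in> K2\<close>] by linarith
  qed
  then show ?thesis using x2(1) K2_def by blast
qed

end

context cset begin

lemma quad_growth:
  assumes u: "u \<in> C" and mx: "\<forall>v\<in>C. g \<theta> v \<le> g \<theta> u" and v: "v \<in> C"
  shows "g \<theta> v \<le> g \<theta> u - (N (v - u))\<^sup>2 / (2 * \<beta>)"
proof -
  define K where "K = (N (v - u))\<^sup>2 / (2 * \<beta>)"
  define A where "A = g \<theta> u - g \<theta> v"
  have K0: "K \<ge> 0" unfolding K_def using bpos by simp
  have H: "(1 - t) * K \<le> A" if t: "0 < t" "t \<le> 1" for t
  proof -
    have "t * g \<theta> v + (1 - t) * g \<theta> u + t * (1 - t) / (2 * \<beta>) * (N (v - u))\<^sup>2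
          \<le> g \<theta> (t *\<^sub>R v + (1 - t) *\<^sub>R u)" using g_conc[OF v u] t by simp
    also have "\<dots> \<le> g \<theta> u" using mx cmb[OF v u] t by simp
    finally have "t * ((1 - t) * K - A) \<le> 0" unfolding K_def A_def by (simp add: algebra_simps)
    then have "(1 - t) * K - A \<le> 0" using t(1) by (simp add: mult_le_0_iff)
    then show ?thesis by simp
  qed
  have A0: "A \<ge> 0" using H[of 1] by simp
  have "K \<le> A"
  proof (rule ccontr)
    assume "\<not> K \<le> A"
    then have KA: "A < K" by simp
    define t where "t = (K - A) / (2 * K)"
    have Kp: "K > 0" using KA A0 by simp
    have "0 < t" "t \<le> 1" using KA A0 Kp by (auto simp: t_def field_simps)
    then have "(1 - t) * K \<le> A" by (rule H)
    moreover have "(1 - t) * K = (K + A) / 2" using Kp by (simp add: t_def field_simps)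
    ultimately show False using KA by simp
  qed
  then show ?thesis unfolding K_def A_def by simp
qed

definition um where "um \<theta> = (SOME u. u \<in> C \<and> (\<forall>v\<in>C. g \<theta> v \<le> g \<theta> u))"
definition Fr where "Fr \<theta> = g \<theta> (um \<theta>)"

lemma um_prop: "um \<theta> \<in> C \<and> (\<forall>v\<in>C. g \<theta> v \<le> g \<theta> (um \<theta>))"
proof -
  have "\<exists>u. u \<in> C \<and> (\<forall>v\<in>C. g \<theta> v \<le> g \<theta> u)" using max_exists by blast
  then show ?thesis unfolding um_def by (rule someI_ex)
qed

lemma umC: "um \<theta> \<in> C" using um_prop by blast

lemma um_quad: "v \<in> C \<Longrightarrow> g \<theta> v \<le> Fr \<theta> - (N (v - um \<theta>))\<^sup>2 / (2 * \<beta>)"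
  unfolding Fr_def using quad_growth[of "um \<theta>" \<theta> v] um_prop by blast

lemma conj_eq: "fenchel_conj (Omega \<Psi> C) \<theta> = ereal (Fr \<theta>)"
  unfolding fenchel_conj_def
proof (rule antisym)
  show "(SUP u. ereal (\<theta> \<bullet> u) - Omega \<Psi> C u) \<le> ereal (Fr \<theta>)"
  proof (rule SUP_least)
    fix u
    show "ereal (\<theta> \<bullet> u) - Omega \<Psi> C u \<le> ereal (Fr \<theta>)"
    proof (cases "u \<in> C")
      case True
      then have "g \<theta> u \<le> Fr \<theta>" using um_prop unfolding Fr_def by blast
      then show ?thesis using True Psi_fin[OF True] unfolding Omega_def g_def by simp
    next
      case False
      then show ?thesis unfolding Omega_def by simp
    qed
  qed
  show "ereal (Fr \<theta>) \<le> (SUP u. ereal (\<theta> \<bullet> u) - Omega \<Psi> C u)"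
  proof (rule SUP_upper2[of "um \<theta>"])
    show "ereal (Fr \<theta>) \<le> ereal (\<theta> \<bullet> um \<theta>) - Omega \<Psi> C (um \<theta>)"
      using umC Psi_fin[OF umC] unfolding Omega_def Fr_def g_def by simp
  qed simp
qed

lemma Fr_lower: "Fr \<theta> + k \<bullet> um \<theta> \<le> Fr (\<theta> + k)"
proof -
  have "g (\<theta> + k) (um \<theta>) \<le> Fr (\<theta> + k)" using um_prop[of "\<theta> + k"] umC unfolding Fr_def by blast
  then show ?thesis unfolding Fr_def g_def by (simp add: inner_add_left)
qed

lemma Fr_upper:
  "Fr (\<theta> + k) - Fr \<theta> - k \<bullet> um \<theta> \<le> k \<bullet> (um (\<theta> + k) - um \<theta>) - (N (um (\<theta> + k) - um \<theta>))\<^sup>2 / (2 * \<beta>)"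
proof -
  have "g \<theta> (um (\<theta> + k)) \<le> Fr \<theta> - (N (um (\<theta> + k) - um \<theta>))\<^sup>2 / (2 * \<beta>)"
    by (rule um_quad[OF umC])
  moreover have "Fr (\<theta> + k) = k \<bullet> um (\<theta> + k) + g \<theta> (um (\<theta> + k))"
    unfolding Fr_def g_def by (simp add: inner_add_left)
  ultimately show ?thesis by (simp add: inner_diff_right)
qed

lemma quad_bound:
  fixes a x b :: real
  assumes "b > 0"
  shows "a * x - b * x\<^sup>2 \<le> a\<^sup>2 / (4 * b)"
proof -
  have "4 * b * (a * x - b * x\<^sup>2) = a\<^sup>2 - (a - 2 * b * x)\<^sup>2" by (simp add: power2_eq_square algebra_simps)
  also have "\<dots> \<le> a\<^sup>2" by simp
  finally have "4 * b * (a * x - b * x\<^sup>2) \<le> a\<^sup>2" .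
  then show ?thesis using assms by (simp add: pos_le_divide_eq mult.commute)
qed

lemma Fr_deriv: "(Fr has_derivative (\<lambda>h. um \<theta> \<bullet> h)) (at \<theta>)"
  unfolding has_derivative_at_alt
proof (intro conjI allI impI)
  show "bounded_linear (\<lambda>h. um \<theta> \<bullet> h)" by (rule bounded_linear_inner_right)
  obtain c0 where c0: "c0 > 0" "\<And>x. c0 * norm x \<le> N x" using nN_lower[OF nrm] by blast
  fix e :: real assume e: "e > 0"
  define d where "d = 2 * c0\<^sup>2 * e / \<beta>"
  show "\<exists>d>0. \<forall>y. norm (y - \<theta>) < d \<longrightarrow> norm (Fr y - Fr \<theta> - um \<theta> \<bullet> (y - \<theta>)) \<le> e * norm (y - \<theta>)"
  proof (intro exI[of _ d] conjI allI impI)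
    show "d > 0" using c0 e bpos by (simp add: d_def)
    fix y assume yd: "norm (y - \<theta>) < d"
    define k where "k = y - \<theta>"
    define D where "D = um (\<theta> + k) - um \<theta>"
    have yk: "y = \<theta> + k" by (simp add: k_def)
    have lo: "0 \<le> Fr y - Fr \<theta> - um \<theta> \<bullet> k" using Fr_lower[of \<theta> k] yk by (simp add: inner_commute)
    have up: "Fr y - Fr \<theta> - um \<theta> \<bullet> k \<le> k \<bullet> D - (N D)\<^sup>2 / (2 * \<beta>)"
      using Fr_upper[of \<theta> k] yk by (simp add: D_def inner_commute)
    have "k \<bullet> D \<le> norm k * norm D" by (rule norm_cauchy_schwarz)
    moreover have "(c0 * norm D)\<^sup>2 \<le> (N D)\<^sup>2" using c0 by (intro power_mono) auto
    ultimately have "k \<bullet> D - (N D)\<^sup>2 / (2 * \<beta>) \<le> norm k * norm D - (c0\<^sup>2 / (2 * \<beta>)) * (norm D)\<^sup>2"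
    proof -
      assume a1: "k \<bullet> D \<le> norm k * norm D" and a2: "(c0 * norm D)\<^sup>2 \<le> (N D)\<^sup>2"
      have "(c0 * norm D)\<^sup>2 / (2 * \<beta>) \<le> (N D)\<^sup>2 / (2 * \<beta>)" using a2 bpos by (simp add: divide_right_mono)
      moreover have "(c0\<^sup>2 / (2 * \<beta>)) * (norm D)\<^sup>2 = (c0 * norm D)\<^sup>2 / (2 * \<beta>)" by (simp add: power_mult_distrib)
      ultimately show ?thesis using a1 by linarith
    qed
    also have "\<dots> \<le> (norm k)\<^sup>2 / (4 * (c0\<^sup>2 / (2 * \<beta>)))"
      by (rule quad_bound) (use c0 bpos in simp)
    also have "\<dots> = \<beta> * (norm k)\<^sup>2 / (2 * c0\<^sup>2)" using c0 bpos by (simp add: field_simps)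
    also have "\<dots> \<le> e * norm k"
    proof -
      have "\<beta> * norm k \<le> 2 * c0\<^sup>2 * e" using yd bpos unfolding d_def k_def by (simp add: field_simps)
      then have "\<beta> * norm k * norm k \<le> 2 * c0\<^sup>2 * e * norm k" by (simp add: mult_right_mono)
      then show ?thesis using c0 by (simp add: field_simps power2_eq_square)
    qed
    finally show "norm (Fr y - Fr \<theta> - um \<theta> \<bullet> (y - \<theta>)) \<le> e * norm (y - \<theta>)"
      using lo up by (simp add: k_def)
  qed
qed

lemma proj_eq: "proj_PsiC \<Psi> C \<theta> = um \<theta>"
proof -
  have fe: "(\<lambda>z. real_of_ereal (fenchel_conj (Omega \<Psi> C) z)) = Fr" using conj_eq by simp
  have ex: "((\<lambda>z. real_of_ereal (fenchel_conj (Omega \<Psi> C) z)) has_derivative (\<lambda>h. um \<theta> \<bullet> h)) (at \<theta>)"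
    unfolding fe by (rule Fr_deriv)
  then have "((\<lambda>z. real_of_ereal (fenchel_conj (Omega \<Psi> C) z)) has_derivative (\<lambda>h. egrad (fenchel_conj (Omega \<Psi> C)) \<theta> \<bullet> h)) (at \<theta>)"
    unfolding egrad_def by (rule someI)
  then have "(\<lambda>h. egrad (fenchel_conj (Omega \<Psi> C)) \<theta> \<bullet> h) = (\<lambda>h. um \<theta> \<bullet> h)"
    using ex by (rule has_derivative_unique)
  then have "egrad (fenchel_conj (Omega \<Psi> C)) \<theta> \<bullet> h = um \<theta> \<bullet> h" for h by meson
  then have "(egrad (fenchel_conj (Omega \<Psi> C)) \<theta> - um \<theta>) \<bullet> (egrad (fenchel_conj (Omega \<Psi> C)) \<theta> - um \<theta>) = 0"
    by (simp add: inner_diff_left)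
  then show ?thesis unfolding proj_PsiC_def by simp
qed

end

lemma dual_vec:
  fixes N :: "real^'p \<Rightarrow> real"
  assumes nrm: "is_norm N" and eta: "\<eta> > 0"
  shows "\<exists>h. (\<forall>x. h \<bullet> x \<le> N x) \<and> N d / (1 + \<eta>) \<le> h \<bullet> d"
proof (cases "d = 0")
  case True
  then show ?thesis using nN_nonneg[OF nrm] nN_0[OF nrm] by (intro exI[of _ 0]) simp
next
  case False
  define B where "B = {x. N x \<le> 1}"
  have Nd: "N d > 0" using False nN_eq0[OF nrm, of d] nN_nonneg[OF nrm, of d] by linarith
  have cvx: "convex B" unfolding B_def convex_def
  proof (intro allI impI ballI, clarsimp)
    fix x y :: "real^'p" and u v :: real
    assume "N x \<le> 1" "N y \<le> 1" "0 \<le> u" "0 \<le> v" "u + v = 1"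
    then have "N (u *\<^sub>R x + v *\<^sub>R y) \<le> u * N x + v * N y"
      using nN_add[OF nrm, of "u *\<^sub>R x" "v *\<^sub>R y"] nN_scale[OF nrm] by simp
    also have "\<dots> \<le> u * 1 + v * 1"
      using \<open>N x \<le> 1\<close> \<open>N y \<le> 1\<close> \<open>0 \<le> u\<close> \<open>0 \<le> v\<close> by (intro add_mono mult_left_mono) auto
    finally show "N (u *\<^sub>R x + v *\<^sub>R y) \<le> 1" using \<open>u + v = 1\<close> by simp
  qed
  have cl: "closed B" unfolding B_def by (rule closed_Collect_le[OF nN_cont[OF nrm]]) simp
  define z where "z = ((1 + \<eta>) / N d) *\<^sub>R d"
  have Nz: "N z = 1 + \<eta>" unfolding z_def using Nd eta by (simp add: nN_scale[OF nrm])
  then have "z \<notin> B" using eta by (simp add: B_def)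
  then obtain a b where ab: "a \<bullet> z < b" "\<forall>x\<in>B. b < a \<bullet> x"
    using separating_hyperplane_closed_point[OF cvx cl] by blast
  have "0 \<in> B" by (simp add: B_def nN_0[OF nrm])
  then have b0: "b < 0" using ab(2) by auto
  define h where "h = (1 / b) *\<^sub>R a"
  have hB: "h \<bullet> x < 1" if "x \<in> B" for x
  proof -
    have "b < a \<bullet> x" using ab(2) that by blast
    then show ?thesis using b0 by (simp add: h_def divide_less_eq)
  qed
  have hz: "h \<bullet> z > 1" using ab(1) b0 by (simp add: h_def less_divide_eq)
  have hN: "h \<bullet> x \<le> N x" for x
  proof (cases "x = 0")
    case True then show ?thesis by (simp add: nN_0[OF nrm])
  next
    case False
    then have Nx: "N x > 0" using nN_eq0[OF nrm, of x] nN_nonneg[OF nrm, of x] by linarith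
    have "(1 / N x) *\<^sub>R x \<in> B" using Nx by (simp add: B_def nN_scale[OF nrm])
    then have "h \<bullet> ((1 / N x) *\<^sub>R x) < 1" by (rule hB)
    then show ?thesis using Nx by (simp add: divide_less_eq)
  qed
  have "h \<bullet> z = ((1 + \<eta>) / N d) * (h \<bullet> d)" by (simp add: z_def)
  then have "1 < ((1 + \<eta>) / N d) * (h \<bullet> d)" using hz by simp
  then have "N d < (1 + \<eta>) * (h \<bullet> d)" using Nd by (simp add: field_simps)
  then have "N d / (1 + \<eta>) \<le> h \<bullet> d" using eta by (simp add: field_simps)
  then show ?thesis using hN by blast
qed

lemma dual_le:
  fixes N :: "real^'p \<Rightarrow> real"
  assumes nrm: "is_norm N"
  shows "v \<bullet> y \<le> dual_norm N v * N y"
proof (cases "y = 0")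
  case True then show ?thesis by (simp add: nN_0[OF nrm])
next
  case False
  obtain c0 where c0: "c0 > 0" "\<And>x. c0 * norm x \<le> N x" using nN_lower[OF nrm] by blast
  have bdd: "bdd_above {v \<bullet> u | u. N u \<le> 1}"
  proof (rule bdd_aboveI, clarify)
    fix u :: "real^'p" assume "N u \<le> 1"
    then have "c0 * norm u \<le> 1" using c0(2)[of u] by linarith
    then have "norm u \<le> 1 / c0" using c0(1) by (simp add: field_simps)
    then have "norm v * norm u \<le> norm v * (1 / c0)" by (rule mult_left_mono) simp
    then show "v \<bullet> u \<le> norm v * (1 / c0)" using norm_cauchy_schwarz[of v u] by linarith
  qed
  have Ny: "N y > 0" using False nN_eq0[OF nrm, of y] nN_nonneg[OF nrm, of y] by linarith
  have "N ((1 / N y) *\<^sub>R y) \<le> 1" using Ny by (simp add: nN_scale[OF nrm])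
  then have "v \<bullet> ((1 / N y) *\<^sub>R y) \<le> dual_norm N v"
    unfolding dual_norm_def by (intro cSup_upper[OF _ bdd]) blast
  then show ?thesis using Ny by (simp add: field_simps)
qed

lemma ereal_diff_lower: "X \<le> ereal b \<Longrightarrow> ereal (a - b) \<le> ereal a - X"
  by (cases X) auto

lemma ereal_eps:
  assumes "\<And>\<eta>. \<eta> > 0 \<Longrightarrow> ereal (M - \<eta> * K) \<le> X" and "K \<ge> 0"
  shows "ereal M \<le> X"
proof (cases X)
  case (real x)
  have "M \<le> x + e" if "e > 0" for e
  proof -
    have "ereal (M - (e / (K + 1)) * K) \<le> X" using assms(1)[of "e / (K + 1)"] that assms(2) by simp
    then have "M - (e / (K + 1)) * K \<le> x" using real by simp
    moreover have "(e / (K + 1)) * K \<le> e" using that assms(2) by (simp add: field_simps)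
    ultimately show ?thesis by linarith
  qed
  then have "M \<le> x" by (rule field_le_epsilon)
  then show ?thesis using real by simp
next
  case PInf then show ?thesis by simp
next
  case MInf
  then show ?thesis using assms(1)[of 1] by simp
qed

context cset begin

lemma descent:
  assumes h: "\<forall>x. h \<bullet> x \<le> N x" and t: "t \<ge> 0"
  shows "Fr (\<theta> - t *\<^sub>R h) \<le> Fr \<theta> - t * (h \<bullet> um \<theta>) + \<beta> * t\<^sup>2 / 2"
proof -
  define k where "k = - (t *\<^sub>R h)"
  define D where "D = um (\<theta> + k) - um \<theta>"
  have th: "\<theta> - t *\<^sub>R h = \<theta> + k" by (simp add: k_def)
  have up: "Fr (\<theta> + k) - Fr \<theta> - k \<bullet> um \<theta> \<le> k \<bullet> D - (N D)\<^sup>2 / (2 * \<beta>)"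
    using Fr_upper[of \<theta> k] by (simp add: D_def)
  have "k \<bullet> D = t * (h \<bullet> (- D))" by (simp add: k_def)
  also have "\<dots> \<le> t * N (- D)" using spec[OF h, of "- D"] t by (rule mult_left_mono)
  also have "\<dots> = t * N D" by (simp add: nN_neg[OF nrm])
  finally have kD: "k \<bullet> D \<le> t * N D" .
  have "t * N D - (1 / (2 * \<beta>)) * (N D)\<^sup>2 \<le> t\<^sup>2 / (4 * (1 / (2 * \<beta>)))"
    by (rule quad_bound) (use bpos in simp)
  also have "\<dots> = \<beta> * t\<^sup>2 / 2" by simp
  finally have "t * N D - (N D)\<^sup>2 / (2 * \<beta>) \<le> \<beta> * t\<^sup>2 / 2" by simp
  moreover have "k \<bullet> um \<theta> = - t * (h \<bullet> um \<theta>)" by (simp add: k_def)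
  ultimately show ?thesis unfolding th using up kD by linarith
qed

end

theorem mainTheorem8:
  fixes \<phi> :: "'y::finite \<Rightarrow> real^'p"
    and \<psi> :: "'o::finite \<Rightarrow> real^'p"
    and V :: "real^'p^'p" and b :: "real^'p" and c :: "'y \<Rightarrow> real"
    and L :: "'o \<Rightarrow> 'y \<Rightarrow> real"
    and \<Psi> :: "real^'p \<Rightarrow> ereal" and C :: "(real^'p) set"
    and N :: "real^'p \<Rightarrow> real" and \<beta> \<sigma> :: real
    and yhat :: "real^'p \<Rightarrow> 'o"
  assumes L_def: "\<And>yh y. L yh y = \<psi> yh \<bullet> (V *v \<phi> y + b) + c y"
    and legendre: "legendre_type \<Psi>"
    and norm: "is_norm N"
    and beta_pos: "\<beta> > 0"
    and strong: "strongly_convex_over \<Psi> C N \<beta>"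
    and C_closed: "closed C" and C_convex: "convex C"
    and phi_C: "range \<phi> \<subseteq> C" and C_dom: "C \<subseteq> edom \<Psi>"
    and sigma_def: "\<sigma> = Max (range (\<lambda>yh. dual_norm N (transpose V *v \<psi> yh)))"
    and sigma_pos: "\<sigma> > 0"
    and yhat_min: "\<And>u y'. \<psi> (yhat u) \<bullet> (V *v u + b) \<le> \<psi> y' \<bullet> (V *v u + b)"
  shows "\<forall>\<epsilon>\<ge>0. calibration_fun L (surrogate \<Psi> C \<phi>) (yhat \<circ> proj_PsiC \<Psi> C) \<epsilon>
           \<ge> ereal (\<epsilon>\<^sup>2 / (8 * \<beta> * \<sigma>\<^sup>2))"
proof (intro allI impI)
  fix \<epsilon> :: real assume eps: "\<epsilon> \<ge> 0"
  have closedE: "closed_efun \<Psi>" using legendre unfolding legendre_type_def by blast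
  have notminf: "\<And>x. \<Psi> x \<noteq> -\<infinity>" using legendre unfolding legendre_type_def proper_fun_def by blast
  have Cne: "C \<noteq> {}" using phi_C by auto
  interpret cset \<Psi> C N \<beta>
    by unfold_locales (use closedE notminf norm beta_pos strong C_closed C_convex Cne C_dom in auto)
  show "calibration_fun L (surrogate \<Psi> C \<phi>) (yhat \<circ> proj_PsiC \<Psi> C) \<epsilon> \<ge> ereal (\<epsilon>\<^sup>2 / (8 * \<beta> * \<sigma>\<^sup>2))"
    unfolding calibration_fun_def
  proof (rule INF_greatest, clarify)
    fix \<theta> and q :: "'y \<Rightarrow> real"
    assume q: "q \<in> prob_simplex" and el: "\<epsilon> \<le> excess_loss L ((yhat \<circ> proj_PsiC \<Psi> C) \<theta>) q"
    have q0: "\<And>y. 0 \<le> q y" "sum q UNIV = 1" using q unfolding prob_simplex_def by auto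
    define u where "u = um \<theta>"
    have proj: "proj_PsiC \<Psi> C \<theta> = u" unfolding u_def by (rule proj_eq)
    define \<mu> where "\<mu> = (\<Sum>y\<in>UNIV. q y *\<^sub>R \<phi> y)"
    define w where "w yh = \<psi> yh v* V" for yh
    have Lw: "L yh y = w yh \<bullet> \<phi> y + \<psi> yh \<bullet> b + c y" for yh y
      using L_def by (simp add: w_def dot_lmul_matrix inner_add_right)
    have pl: "ptw_loss L yh q = w yh \<bullet> \<mu> + \<psi> yh \<bullet> b + (\<Sum>y\<in>UNIV. q y * c y)" for yh
    proof -
      have "ptw_loss L yh q = (\<Sum>y\<in>UNIV. q y * (w yh \<bullet> \<phi> y)) + (\<Sum>y\<in>UNIV. q y) * (\<psi> yh \<bullet> b) + (\<Sum>y\<in>UNIV. q y * c y)"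
        unfolding ptw_loss_def Lw by (simp add: algebra_simps sum.distrib sum_distrib_right)
      moreover have "(\<Sum>y\<in>UNIV. q y * (w yh \<bullet> \<phi> y)) = w yh \<bullet> \<mu>"
        by (simp add: \<mu>_def inner_sum_right)
      ultimately show ?thesis using q0 by simp
    qed
    have "Min (range (\<lambda>y'. ptw_loss L y' q)) \<in> range (\<lambda>y'. ptw_loss L y' q)" by simp
    then obtain ys where ys0: "Min (range (\<lambda>y'. ptw_loss L y' q)) = ptw_loss L ys q" by (rule rangeE)
    note ys = ys0[symmetric]
    define yh where "yh = yhat u"
    have exl: "excess_loss L yh q = (w yh - w ys) \<bullet> \<mu> + (\<psi> yh - \<psi> ys) \<bullet> b"
    proof -
      have "excess_loss L yh q = ptw_loss L yh q - ptw_loss L ys q" unfolding excess_loss_def ys ..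
      then show ?thesis unfolding pl by (simp add: inner_diff_left)
    qed
    have "\<psi> yh \<bullet> (V *v u + b) \<le> \<psi> ys \<bullet> (V *v u + b)" unfolding yh_def by (rule yhat_min)
    then have ym: "w yh \<bullet> u + \<psi> yh \<bullet> b \<le> w ys \<bullet> u + \<psi> ys \<bullet> b"
      by (simp add: w_def dot_lmul_matrix inner_add_right)
    have el2: "\<epsilon> \<le> w yh \<bullet> (\<mu> - u) + w ys \<bullet> (u - \<mu>)"
      using el ym unfolding proj comp_def exl[unfolded yh_def]
      by (simp add: yh_def inner_diff_left inner_diff_right algebra_simps)
    have wd: "w x \<bullet> z \<le> \<sigma> * N z" for x z
    proof -
      have "w x \<bullet> z \<le> dual_norm N (w x) * N z" by (rule dual_le[OF norm])
      moreover have "dual_norm N (w x) \<le> \<sigma>"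
        unfolding sigma_def by (rule Max_ge) (auto simp: w_def)
      ultimately show ?thesis using nN_nonneg[OF norm, of z] by (meson mult_right_mono order_trans)
    qed
    define d where "d = u - \<mu>"
    have eps_d: "\<epsilon> \<le> 2 * \<sigma> * N d"
    proof -
      have a1: "w yh \<bullet> (\<mu> - u) \<le> \<sigma> * N d"
        using wd[of yh "\<mu> - u"] unfolding d_def nN_sym[OF norm, of \<mu> u] .
      have a2: "w ys \<bullet> (u - \<mu>) \<le> \<sigma> * N d"
        using wd[of ys "u - \<mu>"] unfolding d_def .
      have "\<epsilon> \<le> \<sigma> * N d + \<sigma> * N d" using el2 a1 a2 by linarith
      then show ?thesis by simp
    qed
    define S0 where "S0 = (\<Sum>y\<in>UNIV. q y * pr (\<phi> y))"
    define P where "P \<theta>' = Fr \<theta>' - \<theta>' \<bullet> \<mu> + S0" for \<theta>'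
    have sur: "surrogate \<Psi> C \<phi> \<theta>' y = ereal (Fr \<theta>' + pr (\<phi> y) - \<theta>' \<bullet> \<phi> y)" for \<theta>' y
    proof -
      have "\<phi> y \<in> C" using phi_C by auto
      then show ?thesis unfolding surrogate_def conj_eq Omega_def using Psi_fin by simp
    qed
    have ps: "ptw_surr (surrogate \<Psi> C \<phi>) \<theta>' q = ereal (P \<theta>')" for \<theta>'
    proof -
      have "ptw_surr (surrogate \<Psi> C \<phi>) \<theta>' q = ereal (\<Sum>y\<in>UNIV. q y * (Fr \<theta>' + pr (\<phi> y) - \<theta>' \<bullet> \<phi> y))"
        unfolding ptw_surr_def sur by simp
      also have "(\<Sum>y\<in>UNIV. q y * (Fr \<theta>' + pr (\<phi> y) - \<theta>' \<bullet> \<phi> y))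
          = (\<Sum>y\<in>UNIV. q y) * Fr \<theta>' + S0 - (\<Sum>y\<in>UNIV. q y * (\<theta>' \<bullet> \<phi> y))"
        unfolding S0_def by (simp add: algebra_simps sum.distrib sum_subtractf sum_distrib_right)
      also have "(\<Sum>y\<in>UNIV. q y * (\<theta>' \<bullet> \<phi> y)) = \<theta>' \<bullet> \<mu>" by (simp add: \<mu>_def inner_sum_right)
      finally show ?thesis using q0 by (simp add: P_def)
    qed
    define M where "M = (N d)\<^sup>2 / (2 * \<beta>)"
    define K where "K = (N d)\<^sup>2 / \<beta>"
    have Nd0: "N d \<ge> 0" by (rule nN_nonneg[OF norm])
    have main: "ereal (M - \<eta> * K) \<le> excess_surr (surrogate \<Psi> C \<phi>) \<theta> q" if eta: "\<eta> > 0" for \<eta>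
    proof -
      obtain h where h: "\<forall>x. h \<bullet> x \<le> N x" "N d / (1 + \<eta>) \<le> h \<bullet> d"
        using dual_vec[OF norm eta] by blast
      define t where "t = N d / \<beta>"
      have t0: "t \<ge> 0" using Nd0 beta_pos by (simp add: t_def)
      have desc: "Fr (\<theta> - t *\<^sub>R h) \<le> Fr \<theta> - t * (h \<bullet> u) + \<beta> * t\<^sup>2 / 2"
        unfolding u_def by (rule descent[OF h(1) t0])
      have "P (\<theta> - t *\<^sub>R h) = Fr (\<theta> - t *\<^sub>R h) - \<theta> \<bullet> \<mu> + t * (h \<bullet> \<mu>) + S0"
        by (simp add: P_def inner_diff_left)
      also have "\<dots> \<le> P \<theta> - t * (h \<bullet> d) + \<beta> * t\<^sup>2 / 2"
        using desc by (simp add: P_def d_def inner_diff_right algebra_simps)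
      finally have P1: "P (\<theta> - t *\<^sub>R h) \<le> P \<theta> - t * (h \<bullet> d) + \<beta> * t\<^sup>2 / 2" .
      have "N d * (1 - \<eta>) \<le> N d / (1 + \<eta>)"
      proof -
        have "(1 - \<eta>) * (1 + \<eta>) \<le> 1" by (simp add: algebra_simps)
        then have "1 - \<eta> \<le> 1 / (1 + \<eta>)" using eta by (simp add: field_simps)
        then show ?thesis using Nd0 by (metis mult_left_mono times_divide_eq_right mult_1_right)
      qed
      then have "N d * (1 - \<eta>) \<le> h \<bullet> d" using h(2) by linarith
      then have "t * (N d * (1 - \<eta>)) \<le> t * (h \<bullet> d)" using t0 by (rule mult_left_mono)
      moreover have "t * (N d * (1 - \<eta>)) - \<beta> * t\<^sup>2 / 2 = M - \<eta> * K"
        using beta_pos by (simp add: t_def M_def K_def field_simps power2_eq_square)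
      ultimately have P2: "P (\<theta> - t *\<^sub>R h) \<le> P \<theta> - (M - \<eta> * K)" using P1 by linarith
      have "(INF \<theta>'. ptw_surr (surrogate \<Psi> C \<phi>) \<theta>' q) \<le> ereal (P (\<theta> - t *\<^sub>R h))"
        using ps by (metis INF_lower UNIV_I)
      then have "ereal (P \<theta> - P (\<theta> - t *\<^sub>R h)) \<le> ereal (P \<theta>) - (INF \<theta>'. ptw_surr (surrogate \<Psi> C \<phi>) \<theta>' q)"
        by (rule ereal_diff_lower)
      moreover have "M - \<eta> * K \<le> P \<theta> - P (\<theta> - t *\<^sub>R h)" using P2 by linarith
      ultimately show ?thesis unfolding excess_surr_def ps
        by (meson ereal_less_eq(3) order_trans)
    qed
    have "ereal M \<le> excess_surr (surrogate \<Psi> C \<phi>) \<theta> q"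
      by (rule ereal_eps[OF main]) (use beta_pos in \<open>simp_all add: K_def\<close>)
    moreover have "\<epsilon>\<^sup>2 / (8 * \<beta> * \<sigma>\<^sup>2) \<le> M"
    proof -
      have "\<epsilon>\<^sup>2 \<le> (2 * \<sigma> * N d)\<^sup>2" using eps eps_d by (intro power_mono) auto
      then have "\<epsilon>\<^sup>2 \<le> 4 * \<sigma>\<^sup>2 * (N d)\<^sup>2" by (simp add: power_mult_distrib)
      then have "\<epsilon>\<^sup>2 / (8 * \<beta> * \<sigma>\<^sup>2) \<le> 4 * \<sigma>\<^sup>2 * (N d)\<^sup>2 / (8 * \<beta> * \<sigma>\<^sup>2)"
        using beta_pos sigma_pos by (intro divide_right_mono) auto
      also have "\<dots> = M" using beta_pos sigma_pos by (simp add: M_def field_simps power2_eq_square)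
      finally show ?thesis .
    qed
    ultimately show "ereal (\<epsilon>\<^sup>2 / (8 * \<beta> * \<sigma>\<^sup>2)) \<le> excess_surr (surrogate \<Psi> C \<phi>) \<theta> q"
      by (meson ereal_less_eq(3) order_trans)
  qed
qed

end
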